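(* There exist a single-item 2-bidder interdependent-values setting whose valuation profile is $c$-single-crossing for some constant $c\ge1$, and a signal profile $\mathbf s$, such that neither the second-price auction for interdependent values nor the generalized Vickrey auction admits a pure Nash equilibrium at $\mathbf s$ under the no-overbidding assumption.
   Context: Single-item interdependent-values setting: bidders have private signals $s_i\in S_i\subseteq\mathbb R_{\ge0}$ and publicly known valuations $v_i(\mathbf s)$, weakly increasing in every coordinate and strictly increasing in $s_i$. $c$-single-crossing ($c\ge1$): for all $i,i'$, $\mathbf s$, $\delta\ge0$, $c\,(v_i(s_i+\delta,\mathbf s_{-i})-v_i(\mathbf s))\ge v_{i'}(s_i+\delta,\mathbf s_{-i})-v_{i'}(\mathbf s)$. Both auctions solicit bids (reported signals) $\mathbf b$ and allocate the item to a bidder with highest $v_i(\mathbf b)$; losers pay nothing. Second-price auction: the winner pays the second-highest value $\max_{j\ne w}v_j(\mathbf b)$. Generalized Vickrey auction: the winner $w$ pays $v_w(b_w^*,\mathbf b_{-w})$, where the critical bid $b_w^*=\min\{b_w: x_w(b_w,\mathbf b_{-w})=1\}$. Utility $u_i(\mathbf b;\mathbf s)=x_i(\mathbf b)v_i(\mathbf s)-p_i(\mathbf b)$. A pure Nash equilibrium at $\mathbf s$ under no-overbidding is a bid profile $\mathbf b\le\mathbf s$ such that no bidder $i$ has $b_i'\le s_i$ with $u_i((b_i',\mathbf b_{-i});\mathbf s)>u_i(\mathbf b;\mathbf s)$. *)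

theory Defs
  imports Complex_Main "HOL-Library.Numeral_Type"
begin

text \<open>Bidders are the elements of a finite type 'i; a (signal or bid) profile is a
  function 'i => real. S i is the signal space of bidder i, v i s the value of bidder i
  at signal profile s.\<close>

definition profiles :: "('i \<Rightarrow> real set) \<Rightarrow> ('i \<Rightarrow> real) set" where
  "profiles S = {s. \<forall>i. s i \<in> S i}"

definition iv_setting :: "('i \<Rightarrow> real set) \<Rightarrow> ('i \<Rightarrow> ('i \<Rightarrow> real) \<Rightarrow> real) \<Rightarrow> bool" where
  "iv_setting S v \<longleftrightarrow>
     (\<forall>i. S i \<noteq> {} \<and> S i \<subseteq> {0..}) \<and>
     (\<forall>i j s t. s \<in> profiles S \<and> t \<in> S j \<and> s j \<le> t \<longrightarrow> v i s \<le> v i (s(j := t))) \<and>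
     (\<forall>i s t. s \<in> profiles S \<and> t \<in> S i \<and> s i < t \<longrightarrow> v i s < v i (s(i := t)))"

definition single_crossing ::
  "('i \<Rightarrow> real set) \<Rightarrow> ('i \<Rightarrow> ('i \<Rightarrow> real) \<Rightarrow> real) \<Rightarrow> real \<Rightarrow> bool" where
  "single_crossing S v c \<longleftrightarrow>
     (\<forall>i i' s \<delta>. s \<in> profiles S \<and> \<delta> \<ge> 0 \<and> s i + \<delta> \<in> S i \<longrightarrow>
        c * (v i (s(i := s i + \<delta>)) - v i s) \<ge> v i' (s(i := s i + \<delta>)) - v i' s)"

definition highest_value_alloc ::
  "('i \<Rightarrow> real set) \<Rightarrow> ('i \<Rightarrow> ('i \<Rightarrow> real) \<Rightarrow> real) \<Rightarrow> (('i \<Rightarrow> real) \<Rightarrow> 'i) \<Rightarrow> bool" where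
  "highest_value_alloc S v x \<longleftrightarrow> (\<forall>b \<in> profiles S. \<forall>j. v j b \<le> v (x b) b)"

definition spa_utility ::
  "('i \<Rightarrow> ('i \<Rightarrow> real) \<Rightarrow> real) \<Rightarrow> (('i \<Rightarrow> real) \<Rightarrow> 'i) \<Rightarrow> 'i \<Rightarrow> ('i \<Rightarrow> real) \<Rightarrow> ('i \<Rightarrow> real) \<Rightarrow> real" where
  "spa_utility v x i b s =
     (if x b = i then v i s - Max ((\<lambda>j. v j b) ` (UNIV - {i})) else 0)"

definition critical_bid ::
  "('i \<Rightarrow> real set) \<Rightarrow> (('i \<Rightarrow> real) \<Rightarrow> 'i) \<Rightarrow> 'i \<Rightarrow> ('i \<Rightarrow> real) \<Rightarrow> real" where
  "critical_bid S x w b = (LEAST t. t \<in> S w \<and> x (b(w := t)) = w)"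

definition gva_utility ::
  "('i \<Rightarrow> real set) \<Rightarrow> ('i \<Rightarrow> ('i \<Rightarrow> real) \<Rightarrow> real) \<Rightarrow> (('i \<Rightarrow> real) \<Rightarrow> 'i) \<Rightarrow> 'i \<Rightarrow> ('i \<Rightarrow> real) \<Rightarrow> ('i \<Rightarrow> real) \<Rightarrow> real" where
  "gva_utility S v x i b s =
     (if x b = i then v i s - v i (b(i := critical_bid S x i b)) else 0)"

definition pure_NE_no_overbidding ::
  "('i \<Rightarrow> real set) \<Rightarrow> ('i \<Rightarrow> ('i \<Rightarrow> real) \<Rightarrow> ('i \<Rightarrow> real) \<Rightarrow> real) \<Rightarrow> ('i \<Rightarrow> real) \<Rightarrow> ('i \<Rightarrow> real) \<Rightarrow> bool" where
  "pure_NE_no_overbidding S u s b \<longleftrightarrow>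
     b \<in> profiles S \<and> (\<forall>i. b i \<le> s i) \<and>
     (\<forall>i b'. b' \<in> S i \<and> b' \<le> s i \<longrightarrow> \<not> (u i (b(i := b')) s > u i b s))"

end

theory Submission
  imports Defs
begin

lemma two_cases: "(i::2) = 0 \<or> i = 1"
proof (cases i)
  case (of_int z)
  then have "z = 0 \<or> z = 1" by (simp, arith)
  then show ?thesis using of_int by auto
qed

lemma UNIV2: "(UNIV::2 set) = {0,1}" using two_cases by auto
lemma UNIV_minus0: "UNIV - {0::2} = {1}" and UNIV_minus1: "UNIV - {1::2} = {0}"
  using UNIV2 by auto

definition SS :: "2 \<Rightarrow> real set" where
  "SS i = (if i = 0 then {0,1} else {0,1,2})"

definition f0 :: "real \<Rightarrow> real \<Rightarrow> real" where
  "f0 a c = (if a = 0 then (if c = 0 then 1 else if c = 1 then 3 else 6)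
             else (if c = 0 then 2 else if c = 1 then 5 else 8))"
definition f1 :: "real \<Rightarrow> real \<Rightarrow> real" where
  "f1 a c = (if a = 0 then (if c = 0 then 0 else if c = 1 then 4 else 5)
             else (if c = 0 then 3 else if c = 1 then 4 else 7))"
definition vv :: "2 \<Rightarrow> (2 \<Rightarrow> real) \<Rightarrow> real" where
  "vv i b = (if i = 0 then f0 (b 0) (b 1) else f1 (b 0) (b 1))"
definition ss :: "2 \<Rightarrow> real" where
  "ss i = (if i = 0 then 1 else 2)"

lemma prof_iff: "b \<in> profiles SS \<longleftrightarrow> (b 0 = 0 \<or> b 0 = 1) \<and> (b 1 = 0 \<or> b 1 = 1 \<or> b 1 = 2)"
  unfolding profiles_def SS_def using two_cases by auto

lemma iv: "iv_setting SS vv"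
  unfolding iv_setting_def
proof (intro conjI allI impI)
  fix i show "SS i \<noteq> {}" unfolding SS_def by auto
next
  fix i show "SS i \<subseteq> {0..}" unfolding SS_def by auto
next
  fix i j s t assume a: "s \<in> profiles SS \<and> t \<in> SS j \<and> s j \<le> t"
  then show "vv i s \<le> vv i (s(j := t))"
    using two_cases[of i] two_cases[of j] unfolding prof_iff
    by (auto simp: SS_def vv_def f0_def f1_def)
next
  fix i s t assume a: "s \<in> profiles SS \<and> t \<in> SS i \<and> s i < t"
  then show "vv i s < vv i (s(i := t))"
    using two_cases[of i] unfolding prof_iff
    by (auto simp: SS_def vv_def f0_def f1_def)
qed

lemma sc_aux: "s \<in> profiles SS \<Longrightarrow> t \<in> SS i \<Longrightarrow> s i \<le> t \<Longrightarrow>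
   4 * (vv i (s(i := t)) - vv i s) \<ge> vv i' (s(i := t)) - vv i' s"
  using two_cases[of i] two_cases[of i'] unfolding prof_iff
  by (auto simp: SS_def vv_def f0_def f1_def)

lemma sc: "single_crossing SS vv 4"
  unfolding single_crossing_def
  using sc_aux by auto

lemma win:
  assumes h: "highest_value_alloc SS vv x" and b: "b \<in> profiles SS"
  shows "x b = (if f1 (b 0) (b 1) < f0 (b 0) (b 1) then 0 else 1)"
proof -
  have ne: "f1 (b 0) (b 1) \<noteq> f0 (b 0) (b 1)" using b unfolding prof_iff
    by (auto simp: f0_def f1_def)
  have "vv 0 b \<le> vv (x b) b" "vv 1 b \<le> vv (x b) b" using h b unfolding highest_value_alloc_def by auto
  then show ?thesis using two_cases[of "x b"] ne by (auto simp: vv_def)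
qed

lemma crit:
  assumes "t0 \<in> SS w" "x (b(w := t0)) = w" "\<And>t. t \<in> SS w \<Longrightarrow> t < t0 \<Longrightarrow> x (b(w := t)) \<noteq> w"
  shows "critical_bid SS x w b = t0"
  unfolding critical_bid_def
  by (rule Least_equality) (use assms in auto, meson assms(3) not_le)

lemma no_spa:
  assumes h: "highest_value_alloc SS vv x"
  shows "\<not> (\<exists>b. pure_NE_no_overbidding SS (spa_utility vv x) ss b)"
proof
  assume "\<exists>b. pure_NE_no_overbidding SS (spa_utility vv x) ss b"
  then obtain b where b: "b \<in> profiles SS" and
    dev: "\<And>i b'. b' \<in> SS i \<Longrightarrow> b' \<le> ss i \<Longrightarrow> \<not> (spa_utility vv x i (b(i := b')) ss > spa_utility vv x i b ss)"
    unfolding pure_NE_no_overbidding_def by blast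
  have W: "\<And>b. b \<in> profiles SS \<Longrightarrow> x b = (if f1 (b 0) (b 1) < f0 (b 0) (b 1) then 0 else 1)"
    using win[OF h] by blast
  note simps = spa_utility_def UNIV_minus0 UNIV_minus1 vv_def f0_def f1_def ss_def SS_def
  have bc: "(b 0 = 0 \<or> b 0 = 1) \<and> (b 1 = 0 \<or> b 1 = 1 \<or> b 1 = 2)" using b prof_iff by blast
  then consider "b 0 = 0" "b 1 = 0" | "b 0 = 0" "b 1 = 1" | "b 0 = 0" "b 1 = 2"
    | "b 0 = 1" "b 1 = 0" | "b 0 = 1" "b 1 = 1" | "b 0 = 1" "b 1 = 2" by blast
  then show False
  proof cases
    case 1
    have "x b = 0" "x (b(1 := 1)) = 1" using W[of b] W[of "b(1:=1)"] 1 by (auto simp: prof_iff f0_def f1_def)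
    then show False using dev[of 1 1] 1 by (simp add: simps)
  next
    case 2
    have "x b = 1" "x (b(0 := 1)) = 0" using W[of b] W[of "b(0:=1)"] 2 by (auto simp: prof_iff f0_def f1_def)
    then show False using dev[of 1 0] 2 by (simp add: simps)
  next
    case 3
    have "x b = 0" "x (b(1 := 1)) = 1" using W[of b] W[of "b(1:=1)"] 3 by (auto simp: prof_iff f0_def f1_def)
    then show False using dev[of 1 1] 3 by (simp add: simps)
  next
    case 4
    have "x b = 1" "x (b(0 := 0)) = 0" using W[of b] W[of "b(0:=0)"] 4 by (auto simp: prof_iff f0_def f1_def)
    then show False using dev[of 0 0] 4 by (simp add: simps)
  next
    case 5
    have "x b = 0" "x (b(1 := 0)) = 1" using W[of b] W[of "b(1:=0)"] 5 by (auto simp: prof_iff f0_def f1_def)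
    then show False using dev[of 0 1] 5 by (simp add: simps)
  next
    case 6
    have "x b = 0" "x (b(1 := 0)) = 1" using W[of b] W[of "b(1:=0)"] 6 by (auto simp: prof_iff f0_def f1_def)
    then show False using dev[of 0 1] 6 by (simp add: simps)
  qed
qed

lemma no_gva:
  assumes h: "highest_value_alloc SS vv x"
  shows "\<not> (\<exists>b. pure_NE_no_overbidding SS (gva_utility SS vv x) ss b)"
proof
  assume "\<exists>b. pure_NE_no_overbidding SS (gva_utility SS vv x) ss b"
  then obtain b where b: "b \<in> profiles SS" and
    dev: "\<And>i b'. b' \<in> SS i \<Longrightarrow> b' \<le> ss i \<Longrightarrow> \<not> (gva_utility SS vv x i (b(i := b')) ss > gva_utility SS vv x i b ss)"
    unfolding pure_NE_no_overbidding_def by blast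
  have W: "\<And>b. b \<in> profiles SS \<Longrightarrow> x b = (if f1 (b 0) (b 1) < f0 (b 0) (b 1) then 0 else 1)"
    using win[OF h] by blast
  note simps = gva_utility_def vv_def f0_def f1_def ss_def SS_def
  have bc: "(b 0 = 0 \<or> b 0 = 1) \<and> (b 1 = 0 \<or> b 1 = 1 \<or> b 1 = 2)" using b prof_iff by blast
  then consider "b 0 = 0" "b 1 = 0" | "b 0 = 0" "b 1 = 1" | "b 0 = 0" "b 1 = 2"
    | "b 0 = 1" "b 1 = 0" | "b 0 = 1" "b 1 = 1" | "b 0 = 1" "b 1 = 2" by blast
  then show False
  proof cases
  
    case 1
    have X: "x b = 0" "x (b(1 := 1)) = 1" using W[of b] W[of "b(1:=1)"] 1 by (auto simp: prof_iff f0_def f1_def)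
    have C: "critical_bid SS x 1 (b(1 := 1)) = 1"
      using 1 by (intro crit) (auto simp: SS_def W prof_iff f0_def f1_def)
    show False using dev[of 1 1] 1 X C by (simp add: simps)
  next
    case 2
    have X: "x b = 1" "x (b(0 := 1)) = 0" using W[of b] W[of "b(0:=1)"] 2 by (auto simp: prof_iff f0_def f1_def)
    have C: "critical_bid SS x 0 (b(0 := 1)) = 1"
      using 2 by (intro crit) (auto simp: SS_def W prof_iff f0_def f1_def)
    show False using dev[of 1 0] 2 X C by (simp add: simps)
  next
    case 3
    have X: "x b = 0" "x (b(1 := 1)) = 1" using W[of b] W[of "b(1:=1)"] 3 by (auto simp: prof_iff f0_def f1_def)
    have C: "critical_bid SS x 1 (b(1 := 1)) = 1"
      using 3 by (intro crit) (auto simp: SS_def W prof_iff f0_def f1_def)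
    show False using dev[of 1 1] 3 X C by (simp add: simps)
  next
    case 4
    have X: "x b = 1" "x (b(0 := 0)) = 0" using W[of b] W[of "b(0:=0)"] 4 by (auto simp: prof_iff f0_def f1_def)
    have C: "critical_bid SS x 0 (b(0 := 0)) = 0"
      using 4 by (intro crit) (auto simp: SS_def W prof_iff f0_def f1_def)
    show False using dev[of 0 0] 4 X C by (simp add: simps)
  next
    case 5
    have X: "x b = 0" "x (b(1 := 0)) = 1" using W[of b] W[of "b(1:=0)"] 5 by (auto simp: prof_iff f0_def f1_def)
    have C: "critical_bid SS x 1 (b(1 := 0)) = 0"
      using 5 by (intro crit) (auto simp: SS_def W prof_iff f0_def f1_def)
    show False using dev[of 0 1] 5 X C by (simp add: simps)
  next
    case 6
    have X: "x b = 0" "x (b(1 := 0)) = 1" using W[of b] W[of "b(1:=0)"] 6 by (auto simp: prof_iff f0_def f1_def)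
    have C: "critical_bid SS x 1 (b(1 := 0)) = 0"
      using 6 by (intro crit) (auto simp: SS_def W prof_iff f0_def f1_def)
    show False using dev[of 0 1] 6 X C by (simp add: simps)
  qed
qed

theorem mainTheorem4:
  shows "\<exists>(S :: 2 \<Rightarrow> real set) (v :: 2 \<Rightarrow> (2 \<Rightarrow> real) \<Rightarrow> real) (c :: real) (s :: 2 \<Rightarrow> real).
           iv_setting S v \<and> c \<ge> 1 \<and> single_crossing S v c \<and> s \<in> profiles S \<and>
           (\<forall>x. highest_value_alloc S v x \<longrightarrow>
              \<not> (\<exists>b. pure_NE_no_overbidding S (spa_utility v x) s b) \<and>
              \<not> (\<exists>b. pure_NE_no_overbidding S (gva_utility S v x) s b))"
proof (intro exI conjI allI impI)
  show "iv_setting SS vv" by (rule iv)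
  show "(1::real) \<le> 4" by simp
  show "single_crossing SS vv 4" by (rule sc)
  show "ss \<in> profiles SS" by (simp add: prof_iff ss_def)
next
  fix x assume "highest_value_alloc SS vv x"
  then show "\<not> (\<exists>b. pure_NE_no_overbidding SS (spa_utility vv x) ss b)"
    and "\<not> (\<exists>b. pure_NE_no_overbidding SS (gva_utility SS vv x) ss b)"
    using no_spa no_gva by auto
qed

end
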